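(* For every code $u\in\mathrm{PR}_X$ and every $x\in X_\bot$, writing $e(u,x) = (e_{\mathrm{map}}(u,x), e_{\mathrm{arg}}(u,x))$: (1) if $c(u) > 0$ then $c(e_{\mathrm{map}}(u,x)) < c(u)$ in $\mathbb{N}[\omega]$; (2) $c(u) = 0$ if and only if $u = \mathrm{id}$, and in that case $e(u,x) = (u,x)$.
   Context: Universe: $X$ is the smallest set containing the numerals $\nu(n)$ ($n\in\mathbb{N}$) and closed under forming pairs $\langle x;y\rangle$ ($x,y\in X$); $X_\bot = X\cup\{\bot\}$. Codes $\mathrm{PR}_X$: the formal terms generated from the basic symbols $\mathrm{bas}=\{\mathrm{id},\mathring 0,\mathring{\mathrm s},\mathring\Pi,\mathring\Delta,\mathring\ell,\mathring{\mathrm r}\}$ by internal composition $\langle v\odot u\rangle$, internal induced $\langle u;v\rangle$, internal product $\langle u\# v\rangle$ and internal iteration $u^{\$}$. Basic symbols act on $X_\bot$: $\mathrm{id}(x)=x$; $\mathring 0(x)=\nu(0)$; $\mathring{\mathrm s}(\nu(n))=\nu(n+1)$; $\mathring\Pi(x)=\nu(0)$; $\mathring\Delta(x)=\langle x;x\rangle$; $\mathring\ell\langle x;y\rangle = x$, $\mathring{\mathrm r}\langle x;y\rangle = y$; in all other cases (and on $\bot$, except for $\mathrm{id}$) the value is $\bot$. Code expansion: $u^{[0]}=\mathrm{id}$, $u^{[n+1]}=\langle u\odot u^{[n]}\rangle$. Evaluation step $e:\mathrm{PR}_X\times X_\bot\to\mathrm{PR}_X\times X_\bot$, defined by recursion on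 the term structure, taking the first applicable case: (a) $u=\mathrm{ba}\in\mathrm{bas}$: $e(\mathrm{ba},x)=(\mathrm{id},\mathrm{ba}(x))$; (b) $e(\langle v\odot\mathrm{ba}\rangle,x) = (v,\mathrm{ba}(x))$ for $\mathrm{ba}\in\mathrm{bas}$; (c) for $u\notin\mathrm{bas}$: $e(\langle v\odot u\rangle,x) = (\langle v\odot e_{\mathrm{map}}(u,x)\rangle, e_{\mathrm{arg}}(u,x))$; (d) $e(\langle\mathrm{id}\#\mathrm{id}\rangle,\langle y;z\rangle) = (\mathrm{id},\langle y;z\rangle)$; (e) otherwise $e(\langle u\# v\rangle,\langle y;z\rangle) = (\langle e_{\mathrm{map}}(u,y)\# e_{\mathrm{map}}(v,z)\rangle,\langle e_{\mathrm{arg}}(u,y);e_{\mathrm{arg}}(v,z)\rangle)$; (f) $e(\langle\mathrm{id};\mathrm{id}\rangle,z) = (\mathrm{id},\langle z;z\rangle)$ for $z\in X$; (g) otherwise $e(\langle u;v\rangle,z) = (\langle e_{\mathrm{map}}(u,z);e_{\mathrm{map}}(v,z)\rangle,\langle e_{\mathrm{arg}}(u,z);e_{\mathrm{arg}}(v,z)\rangle)$ for $z\in X$; (h) $e(u^{\$},\langle y;\nu(n)\rangle) = (u^{[n]},y)$; (i) in all remaining cases $e(u,x)=(\mathrm{id},\bot)$. Complexity $c:\mathrm{PR}_X\to\mathbb{N}[\omega]$ (polynomials in $\omega$ with natural-number coefficients): $c(\mathrm{id})=0$; $c(\mathrm{ba})=1$ for the other basic symbols; $c\langle v\odot u\rangle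 = c\langle u\#v\rangle = c\langle u;v\rangle = c(u)+c(v)+1$; $c(u^{\$}) = (c(u)+1)\cdot\omega$. $\mathbb{N}[\omega]$ is ordered lexicographically with priority to higher powers: $p<q$ iff $p\ne q$ and at the highest power of $\omega$ where their coefficients differ, the coefficient of $p$ is smaller. *)

theory Defs
  imports "HOL-Computational_Algebra.Polynomial"
begin

text \<open>The universe X: numerals and pairs. X_bot is rendered as X option (None = bottom).\<close>
datatype X = Nu nat | Pr X X

text \<open>Codes PR_X. Comp v u stands for the internal composition (v after u),
  Ind u v for the internal induced map, Prod u v for the internal product, Iter u for u-dollar.\<close>
datatype code = Id | Zero | Suc_c | Pi_c | Delta_c | Left_c | Right_c
  | Comp code code | Ind code code | Prod code code | Iter code

definition bas :: "code set" where
  "bas = {Id, Zero, Suc_c, Pi_c, Delta_c, Left_c, Right_c}"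

fun bas_ap :: "code \<Rightarrow> X option \<Rightarrow> X option" where
  "bas_ap Id x = x"
| "bas_ap Zero (Some x) = Some (Nu 0)"
| "bas_ap Suc_c (Some (Nu n)) = Some (Nu (Suc n))"
| "bas_ap Pi_c (Some x) = Some (Nu 0)"
| "bas_ap Delta_c (Some x) = Some (Pr x x)"
| "bas_ap Left_c (Some (Pr x y)) = Some x"
| "bas_ap Right_c (Some (Pr x y)) = Some y"
| "bas_ap _ _ = None"

fun pair_bot :: "X option \<Rightarrow> X option \<Rightarrow> X option" where
  "pair_bot (Some a) (Some b) = Some (Pr a b)"
| "pair_bot _ _ = None"

fun expand :: "code \<Rightarrow> nat \<Rightarrow> code" where
  "expand u 0 = Id"
| "expand u (Suc n) = Comp u (expand u n)"

fun ev :: "code \<Rightarrow> X option \<Rightarrow> code \<times> X option" where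
  "ev (Comp v u) x =
     (if u \<in> bas then (v, bas_ap u x)
      else (Comp v (fst (ev u x)), snd (ev u x)))"
| "ev (Prod u v) x =
     (case x of
        Some (Pr y z) \<Rightarrow>
          (if u = Id \<and> v = Id then (Id, Some (Pr y z))
           else (Prod (fst (ev u (Some y))) (fst (ev v (Some z))),
                 pair_bot (snd (ev u (Some y))) (snd (ev v (Some z)))))
      | _ \<Rightarrow> (Id, None))"
| "ev (Ind u v) x =
     (case x of
        Some z \<Rightarrow>
          (if u = Id \<and> v = Id then (Id, Some (Pr z z))
           else (Ind (fst (ev u (Some z))) (fst (ev v (Some z))),
                 pair_bot (snd (ev u (Some z))) (snd (ev v (Some z)))))
      | None \<Rightarrow> (Id, None))"
| "ev (Iter u) x =
     (case x of
        Some (Pr y (Nu n)) \<Rightarrow> (expand u n, Some y)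
      | _ \<Rightarrow> (Id, None))"
| "ev ba x = (Id, bas_ap ba x)"

abbreviation emap :: "code \<Rightarrow> X option \<Rightarrow> code" where
  "emap u x \<equiv> fst (ev u x)"

abbreviation earg :: "code \<Rightarrow> X option \<Rightarrow> X option" where
  "earg u x \<equiv> snd (ev u x)"

text \<open>N[omega] as nat polynomials in omega; complexity.\<close>
definition omega :: "nat poly" where "omega = [:0, 1:]"

fun cplx :: "code \<Rightarrow> nat poly" where
  "cplx Id = 0"
| "cplx (Comp v u) = cplx u + cplx v + 1"
| "cplx (Prod u v) = cplx u + cplx v + 1"
| "cplx (Ind u v) = cplx u + cplx v + 1"
| "cplx (Iter u) = (cplx u + 1) * omega"
| "cplx _ = 1"

definition poly_lex_less :: "nat poly \<Rightarrow> nat poly \<Rightarrow> bool" where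
  "poly_lex_less p q \<longleftrightarrow> p \<noteq> q \<and>
     coeff p (Max {i. coeff p i \<noteq> coeff q i}) < coeff q (Max {i. coeff p i \<noteq> coeff q i})"

end

theory Submission
  imports Defs
begin

lemma lex_char:
  "poly_lex_less p q \<longleftrightarrow> (\<exists>k. coeff p k < coeff q k \<and> (\<forall>i>k. coeff p i = coeff q i))"
proof -
  let ?S = "{i. coeff p i \<noteq> coeff q i}"
  have fin: "finite ?S"
  proof (rule finite_subset[of _ "{..max (degree p) (degree q)}"])
    show "?S \<subseteq> {..max (degree p) (degree q)}"
    proof
      fix i assume "i \<in> ?S"
      then show "i \<in> {..max (degree p) (degree q)}"
        by (cases "i \<le> max (degree p) (degree q)") (auto simp: coeff_eq_0)
    qed
  qed auto
  show ?thesis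
  proof
    assume "poly_lex_less p q"
    then have ne: "p \<noteq> q" and lt: "coeff p (Max ?S) < coeff q (Max ?S)"
      unfolding poly_lex_less_def by auto
    have "\<forall>i>Max ?S. coeff p i = coeff q i"
      using fin Max_ge not_le by blast
    then show "\<exists>k. coeff p k < coeff q k \<and> (\<forall>i>k. coeff p i = coeff q i)" using lt by blast
  next
    assume "\<exists>k. coeff p k < coeff q k \<and> (\<forall>i>k. coeff p i = coeff q i)"
    then obtain k where k1: "coeff p k < coeff q k" and k2: "\<forall>i>k. coeff p i = coeff q i" by blast
    have "k \<in> ?S" using k1 by simp
    moreover have "\<forall>i\<in>?S. i \<le> k" using k2 not_le by auto
    ultimately have "Max ?S = k" using fin by (intro Max_eqI) auto
    moreover have "p \<noteq> q" using k1 by auto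
    ultimately show "poly_lex_less p q" unfolding poly_lex_less_def using k1 by simp
  qed
qed

lemma lex_add_right: "poly_lex_less p q \<Longrightarrow> poly_lex_less (p + r) (q + r)"
  unfolding lex_char by auto

lemma lex_add_left: "poly_lex_less p q \<Longrightarrow> poly_lex_less (r + p) (r + q)"
  unfolding lex_char by auto

lemma lex_trans: "poly_lex_less p q \<Longrightarrow> poly_lex_less q r \<Longrightarrow> poly_lex_less p r"
  unfolding lex_char
proof -
  assume "\<exists>k. coeff p k < coeff q k \<and> (\<forall>i>k. coeff p i = coeff q i)"
     and "\<exists>k. coeff q k < coeff r k \<and> (\<forall>i>k. coeff q i = coeff r i)"
  then obtain k1 k2 where a: "coeff p k1 < coeff q k1" "\<forall>i>k1. coeff p i = coeff q i"
     and b: "coeff q k2 < coeff r k2" "\<forall>i>k2. coeff q i = coeff r i" by blast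
  show "\<exists>k. coeff p k < coeff r k \<and> (\<forall>i>k. coeff p i = coeff r i)"
  proof (cases k1 k2 rule: linorder_cases)
    case less then show ?thesis using a b by (intro exI[of _ k2]) auto
  next
    case equal then show ?thesis using a b by (intro exI[of _ k2]) auto
  next
    case greater then show ?thesis using a b by (intro exI[of _ k1]) auto
  qed
qed

lemma lex_zero: "poly_lex_less 0 q \<longleftrightarrow> q \<noteq> 0"
proof
  assume "poly_lex_less 0 q" then show "q \<noteq> 0" unfolding poly_lex_less_def by auto
next
  assume "q \<noteq> 0"
  then have "coeff q (degree q) \<noteq> 0" by (rule leading_coeff_neq_0)
  then have "coeff q (degree q) > 0" by (rule neq0_conv[THEN iffD1])
  then show "poly_lex_less 0 q" unfolding lex_char
    by (intro exI[of _ "degree q"]) (auto simp: coeff_eq_0)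
qed

lemma omega_mult: "p * omega = pCons 0 p"
  unfolding omega_def
  by (simp only: mult_pCons_right smult_0_left mult_zero_right pCons_0_0 add_0 smult_1_left add_0_right)

lemma plus_one_nz: "p + 1 \<noteq> (0::nat poly)"
proof
  assume "p + 1 = 0"
  then have "coeff (p + 1) 0 = coeff 0 0" by (simp only:)
  then show False by simp
qed

lemma cplx_zero: "cplx u = 0 \<longleftrightarrow> u = Id"
proof (cases u)
  case (Iter w)
  have "coeff (cplx u) 1 \<noteq> 0" using Iter by (simp add: omega_mult)
  then show ?thesis using Iter by auto
next
  case (Comp a b)
  then show ?thesis using plus_one_nz by auto
next
  case (Ind a b)
  then show ?thesis using plus_one_nz by auto
next
  case (Prod a b)
  then show ?thesis using plus_one_nz by auto
qed auto

lemma ev_Id: "ev Id x = (Id, x)" by simp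

lemma coeff_expand: "coeff (cplx (expand u n)) i = n * coeff (cplx u + 1) i"
  by (induction n) (auto simp: algebra_simps)

lemma lex_expand: "poly_lex_less (cplx (expand u n)) (cplx (Iter u))"
proof -
  obtain p where p: "p = cplx u + 1" by blast
  have ce: "\<And>i. coeff (cplx (expand u n)) i = n * coeff p i" using p coeff_expand by simp
  have ci: "cplx (Iter u) = pCons 0 p" using p by (simp add: omega_mult)
  have "p \<noteq> 0" using p plus_one_nz by simp
  then have "coeff p (degree p) \<noteq> 0" by (rule leading_coeff_neq_0)
  then have lc: "coeff p (degree p) > 0" by (rule neq0_conv[THEN iffD1])
  show ?thesis unfolding lex_char ci
  proof (intro exI[of _ "Suc (degree p)"] conjI allI impI)
    show "coeff (cplx (expand u n)) (Suc (degree p)) < coeff (pCons 0 p) (Suc (degree p))"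
      using lc by (simp only: ce coeff_pCons_Suc coeff_eq_0 lessI mult_0_right)
  next
    fix i assume "Suc (degree p) < i"
    then obtain j where j: "i = Suc j" "degree p < j" by (cases i) auto
    then show "coeff (cplx (expand u n)) i = coeff (pCons 0 p) i"
      by (simp add: ce coeff_eq_0)
  qed
qed

lemma IH_use: "(poly_lex_less 0 (cplx u) \<Longrightarrow> poly_lex_less (cplx (emap u x)) (cplx u))
   \<Longrightarrow> u \<noteq> Id \<Longrightarrow> poly_lex_less (cplx (emap u x)) (cplx u)"
proof -
  assume h: "poly_lex_less 0 (cplx u) \<Longrightarrow> poly_lex_less (cplx (emap u x)) (cplx u)"
     and "u \<noteq> Id"
  then have "cplx u \<noteq> 0" using cplx_zero by simp
  then have "poly_lex_less 0 (cplx u)" by (rule lex_zero[THEN iffD2])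
  then show ?thesis by (rule h)
qed

lemma nz_lex: "u \<noteq> Id \<Longrightarrow> poly_lex_less 0 (cplx u)"
  by (rule lex_zero[THEN iffD2]) (simp add: cplx_zero)

lemma emap_Id: "emap Id x = Id" by simp

lemma pair_step:
  assumes ne: "\<not> (u = Id \<and> v = Id)"
    and hu: "u \<noteq> Id \<Longrightarrow> poly_lex_less (cplx u') (cplx u)"
    and hv: "v \<noteq> Id \<Longrightarrow> poly_lex_less (cplx v') (cplx v)"
    and eu: "u = Id \<Longrightarrow> u' = Id"
    and ev': "v = Id \<Longrightarrow> v' = Id"
  shows "poly_lex_less (cplx u' + cplx v' + 1) (cplx u + cplx v + 1)"
proof (cases "u = Id")
  case True
  then have v: "v \<noteq> Id" using ne by auto
  have "poly_lex_less (cplx u + (cplx v' + 1)) (cplx u + (cplx v + 1))"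
    by (rule lex_add_left, rule lex_add_right, rule hv[OF v])
  then show ?thesis using True eu by (simp add: add.assoc)
next
  case uF: False
  show ?thesis
  proof (cases "v = Id")
    case True
    have "poly_lex_less (cplx u' + (cplx v + 1)) (cplx u + (cplx v + 1))"
      by (rule lex_add_right, rule hu[OF uF])
    then show ?thesis using True ev' by (simp add: add.assoc)
  next
    case vF: False
    have a: "poly_lex_less (cplx u' + (cplx v' + 1)) (cplx u + (cplx v' + 1))"
      by (rule lex_add_right, rule hu[OF uF])
    have b: "poly_lex_less (cplx u + (cplx v' + 1)) (cplx u + (cplx v + 1))"
      by (rule lex_add_left, rule lex_add_right, rule hv[OF vF])
    have "poly_lex_less (cplx u' + (cplx v' + 1)) (cplx u + (cplx v + 1))"
      by (rule lex_trans[OF a b])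
    then show ?thesis by (simp add: add.assoc)
  qed
qed

lemma main_step: "poly_lex_less 0 (cplx u) \<Longrightarrow> poly_lex_less (cplx (emap u x)) (cplx u)"
proof (induction u arbitrary: x)
  case Id then show ?case by simp
next
  case (Comp v u)
  show ?case
  proof (cases "u \<in> bas")
    case True
    have "cplx u + 1 \<noteq> 0" by (rule plus_one_nz)
    then have "poly_lex_less 0 (cplx u + 1)" by (rule lex_zero[THEN iffD2])
    then have "poly_lex_less (0 + cplx v) (cplx u + 1 + cplx v)" by (rule lex_add_right)
    moreover have "ev (Comp v u) x = (v, bas_ap u x)" using True by simp
    ultimately show ?thesis by (simp add: algebra_simps)
  next
    case False
    then have "u \<noteq> Id" by (auto simp: bas_def)
    then have "poly_lex_less (cplx (emap u x)) (cplx u)" by (rule Comp.IH(2)[OF nz_lex])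
    then have "poly_lex_less (cplx (emap u x) + (cplx v + 1)) (cplx u + (cplx v + 1))" by (rule lex_add_right)
    moreover have "ev (Comp v u) x = (Comp v (emap u x), earg u x)" using False by simp
    ultimately show ?thesis by (simp add: algebra_simps)
  qed
next
  case (Ind u v)
  show ?case
  proof (cases x)
    case None
    then have "ev (Ind u v) x = (Id, None)" by simp
    then show ?thesis using Ind.prems by simp
  next
    case (Some z)
    show ?thesis
    proof (cases "u = Id \<and> v = Id")
      case True
      then have "ev (Ind u v) x = (Id, Some (Pr z z))" using Some by simp
      then show ?thesis using Ind.prems by simp
    next
      case False
      have "poly_lex_less (cplx (emap u (Some z)) + cplx (emap v (Some z)) + 1) (cplx u + cplx v + 1)"
        by (rule pair_step[OF False Ind.IH(1)[OF nz_lex] Ind.IH(2)[OF nz_lex]]) auto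
      moreover have "emap (Ind u v) x = Ind (emap u (Some z)) (emap v (Some z))"
        using Some False by simp
      ultimately show ?thesis by simp
    qed
  qed
next
  case (Prod u v)
  show ?case
  proof (cases "\<exists>y z. x = Some (Pr y z)")
    case False
    then have "ev (Prod u v) x = (Id, None)"
      by (cases x; auto split: X.splits)
    then show ?thesis using Prod.prems by simp
  next
    case True
    then obtain y z where xe: "x = Some (Pr y z)" by blast
    show ?thesis
    proof (cases "u = Id \<and> v = Id")
      case True
      then have "ev (Prod u v) x = (Id, Some (Pr y z))" using xe by simp
      then show ?thesis using Prod.prems by simp
    next
      case False
      have "poly_lex_less (cplx (emap u (Some y)) + cplx (emap v (Some z)) + 1) (cplx u + cplx v + 1)"
        by (rule pair_step[OF False Prod.IH(1)[OF nz_lex] Prod.IH(2)[OF nz_lex]]) auto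
      moreover have "emap (Prod u v) x = Prod (emap u (Some y)) (emap v (Some z))"
        using xe False by simp
      ultimately show ?thesis by simp
    qed
  qed
next
  case (Iter u)
  show ?case
  proof (cases "\<exists>y n. x = Some (Pr y (Nu n))")
    case False
    then have "ev (Iter u) x = (Id, None)"
      by (cases x; auto split: X.splits)
    then show ?thesis using Iter.prems by simp
  next
    case True
    then obtain y n where xe: "x = Some (Pr y (Nu n))" by blast
    then have "emap (Iter u) x = expand u n" by simp
    then show ?thesis using lex_expand by simp
  qed
qed (simp_all add: lex_zero)

theorem mainTheorem9:
  fixes u :: code and x :: "X option"
  shows "(poly_lex_less 0 (cplx u) \<longrightarrow> poly_lex_less (cplx (emap u x)) (cplx u))
       \<and> ((cplx u = 0 \<longleftrightarrow> u = Id) \<and> (cplx u = 0 \<longrightarrow> ev u x = (u, x)))"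
  proof (intro conjI impI)
  show "poly_lex_less (cplx (emap u x)) (cplx u)" if "poly_lex_less 0 (cplx u)" using that by (rule main_step)
  show "cplx u = 0 \<longleftrightarrow> u = Id" by (rule cplx_zero)
  show "ev u x = (u, x)" if "cplx u = 0"
  proof -
    have "u = Id" using that cplx_zero by simp
    then show ?thesis by simp
  qed
qed

end
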